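(* Let $G$ and $H$ be locally finite stiff graphs without isolated vertices. If $N(G)\cong N(H)$ as simplicial complexes, then $K_2\times G\cong K_2\times H$ as 2-colored graphs (i.e. via a graph isomorphism commuting with the first projections to $K_2$).
   Context: A graph $G$ is a set $V(G)$ with a symmetric subset $E(G)\subset V(G)\times V(G)$ (loops allowed); $N(v)=\{w:(v,w)\in E(G)\}$, $v$ isolated if $N(v)=\emptyset$; $G$ is locally finite if every $N(v)$ is finite, and stiff if $N(v)\subset N(w)$ implies $v=w$. The neighborhood complex $N(G)$ is the simplicial complex whose vertices are the non-isolated vertices of $G$ and whose simplices are the finite subsets contained in some $N(v)$. $K_2\times G$ has vertex set $\{1,2\}\times V(G)$, $((i,x),(j,y))$ an edge iff $i\neq j$ and $(x,y)\in E(G)$, and is 2-colored by the first projection to $K_2$ (vertices $\{1,2\}$, edges $(1,2),(2,1)$). *)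

theory Defs
  imports Main
begin

text \<open>A graph: a vertex set V with a symmetric edge relation E \<subseteq> V \<times> V (loops allowed).\<close>
type_synonym 'a graph = "'a set \<times> ('a \<times> 'a) set"

definition verts :: "'a graph \<Rightarrow> 'a set" where "verts G = fst G"
definition edges :: "'a graph \<Rightarrow> ('a \<times> 'a) set" where "edges G = snd G"

definition is_graph :: "'a graph \<Rightarrow> bool" where
  "is_graph G \<longleftrightarrow> edges G \<subseteq> verts G \<times> verts G \<and> sym (edges G)"

definition nbhd :: "'a graph \<Rightarrow> 'a \<Rightarrow> 'a set" where
  "nbhd G v = {w. (v, w) \<in> edges G}"

definition isolated :: "'a graph \<Rightarrow> 'a \<Rightarrow> bool" where
  "isolated G v \<longleftrightarrow> nbhd G v = {}"

definition no_isolated :: "'a graph \<Rightarrow> bool" where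
  "no_isolated G \<longleftrightarrow> (\<forall>v\<in>verts G. \<not> isolated G v)"

definition locally_finite :: "'a graph \<Rightarrow> bool" where
  "locally_finite G \<longleftrightarrow> (\<forall>v\<in>verts G. finite (nbhd G v))"

definition stiff :: "'a graph \<Rightarrow> bool" where
  "stiff G \<longleftrightarrow> (\<forall>v\<in>verts G. \<forall>w\<in>verts G. nbhd G v \<subseteq> nbhd G w \<longrightarrow> v = w)"

type_synonym 'a complex = "'a set \<times> 'a set set"

definition nbhd_complex :: "'a graph \<Rightarrow> 'a complex" where
  "nbhd_complex G =
     ({v \<in> verts G. \<not> isolated G v},
      {\<sigma>. finite \<sigma> \<and> (\<exists>v\<in>verts G. \<sigma> \<subseteq> nbhd G v)})"

definition complex_iso :: "'a complex \<Rightarrow> 'b complex \<Rightarrow> ('a \<Rightarrow> 'b) \<Rightarrow> bool" where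
  "complex_iso K L f \<longleftrightarrow> bij_betw f (fst K) (fst L) \<and>
     (\<forall>\<sigma>. \<sigma> \<subseteq> fst K \<longrightarrow> (\<sigma> \<in> snd K \<longleftrightarrow> f ` \<sigma> \<in> snd L))"

definition complexes_isomorphic :: "'a complex \<Rightarrow> 'b complex \<Rightarrow> bool" where
  "complexes_isomorphic K L \<longleftrightarrow> (\<exists>f. complex_iso K L f)"

definition K2_times :: "'a graph \<Rightarrow> (nat \<times> 'a) graph" where
  "K2_times G =
     ({1, 2} \<times> verts G,
      {((i, x), (j, y)). i \<in> {1, 2} \<and> j \<in> {1, 2} \<and> i \<noteq> j \<and> (x, y) \<in> edges G})"

definition graph_iso :: "'a graph \<Rightarrow> 'b graph \<Rightarrow> ('a \<Rightarrow> 'b) \<Rightarrow> bool" where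
  "graph_iso G H f \<longleftrightarrow> bij_betw f (verts G) (verts H) \<and>
     (\<forall>x\<in>verts G. \<forall>y\<in>verts G. (x, y) \<in> edges G \<longleftrightarrow> (f x, f y) \<in> edges H)"

definition two_colored_isomorphic :: "'a graph \<Rightarrow> 'b graph \<Rightarrow> bool" where
  "two_colored_isomorphic G H \<longleftrightarrow>
     (\<exists>\<phi>. graph_iso (K2_times G) (K2_times H) \<phi> \<and>
          (\<forall>p\<in>verts (K2_times G). fst (\<phi> p) = fst p))"

end

theory Submission
  imports Defs
begin

lemma nbhd_sub: "is_graph G \<Longrightarrow> nbhd G v \<subseteq> verts G"
  unfolding is_graph_def nbhd_def by auto

lemma fst_nc: "no_isolated G \<Longrightarrow> fst (nbhd_complex G) = verts G"
  unfolding no_isolated_def nbhd_complex_def by auto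

lemma nbhd_simplex:
  "locally_finite G \<Longrightarrow> v \<in> verts G \<Longrightarrow> nbhd G v \<in> snd (nbhd_complex G)"
  unfolding locally_finite_def nbhd_complex_def by auto

lemma maximal:
  assumes "stiff G" "v \<in> verts G" "\<tau> \<in> snd (nbhd_complex G)" "nbhd G v \<subseteq> \<tau>"
  shows "\<tau> = nbhd G v"
proof -
  obtain w where w: "w \<in> verts G" "\<tau> \<subseteq> nbhd G w"
    using assms(3) unfolding nbhd_complex_def by auto
  then have "v = w" using assms unfolding stiff_def by blast
  then show ?thesis using w assms(4) by auto
qed

lemma key:
  assumes gG: "is_graph G" and gH: "is_graph H"
    and lG: "locally_finite G" and lH: "locally_finite H" and sG: "stiff G"
    and nG: "no_isolated G" and nH: "no_isolated H"
    and iso: "complex_iso (nbhd_complex G) (nbhd_complex H) f"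
    and v: "v \<in> verts G"
  shows "\<exists>w\<in>verts H. f ` nbhd G v = nbhd H w"
proof -
  have bij: "bij_betw f (verts G) (verts H)"
    and cond: "\<And>\<sigma>. \<sigma> \<subseteq> verts G \<Longrightarrow> (\<sigma> \<in> snd (nbhd_complex G) \<longleftrightarrow> f ` \<sigma> \<in> snd (nbhd_complex H))"
    using iso fst_nc[OF nG] fst_nc[OF nH] unfolding complex_iso_def by auto
  define h where "h = inv_into (verts G) f"
  have NvV: "nbhd G v \<subseteq> verts G" using nbhd_sub[OF gG] .
  have "f ` nbhd G v \<in> snd (nbhd_complex H)"
    using cond[OF NvV] nbhd_simplex[OF lG v] by simp
  then obtain w where w: "w \<in> verts H" "f ` nbhd G v \<subseteq> nbhd H w"
    unfolding nbhd_complex_def by auto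
  have tV: "nbhd H w \<subseteq> verts H" using nbhd_sub[OF gH] .
  have fimg: "f ` verts G = verts H" using bij by (simp add: bij_betw_def)
  have inj: "inj_on f (verts G)" using bij by (simp add: bij_betw_def)
  have fs: "f ` (h ` nbhd H w) = nbhd H w"
    unfolding h_def using tV fimg by (simp add: image_inv_into_cancel)
  have sV: "h ` nbhd H w \<subseteq> verts G"
    unfolding h_def using tV fimg inv_into_into[of _ f "verts G"] by blast
  have tS: "nbhd H w \<in> snd (nbhd_complex H)"
    using nbhd_simplex[OF lH w(1)] .
  have sS: "h ` nbhd H w \<in> snd (nbhd_complex G)"
    using cond[OF sV] fs tS by simp
  have sub: "nbhd G v \<subseteq> h ` nbhd H w"
  proof
    fix x assume x: "x \<in> nbhd G v"
    then have xV: "x \<in> verts G" using NvV by auto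
    have "f x \<in> nbhd H w" using w(2) x by auto
    moreover have "h (f x) = x" unfolding h_def using inv_into_f_f[OF inj xV] .
    ultimately show "x \<in> h ` nbhd H w" by (metis imageI)
  qed
  have "h ` nbhd H w = nbhd G v" using maximal[OF sG v sS sub] .
  then have "f ` nbhd G v = nbhd H w" using fs by simp
  then show ?thesis using w(1) by blast
qed

lemma iso_inv:
  assumes nG: "no_isolated G" and nH: "no_isolated H"
    and iso: "complex_iso (nbhd_complex G) (nbhd_complex H) f"
  shows "complex_iso (nbhd_complex H) (nbhd_complex G) (inv_into (verts G) f)"
proof -
  have bij: "bij_betw f (verts G) (verts H)"
    and cond: "\<And>\<sigma>. \<sigma> \<subseteq> verts G \<Longrightarrow> (\<sigma> \<in> snd (nbhd_complex G) \<longleftrightarrow> f ` \<sigma> \<in> snd (nbhd_complex H))"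
    using iso fst_nc[OF nG] fst_nc[OF nH] unfolding complex_iso_def by auto
  have fimg: "f ` verts G = verts H" using bij by (simp add: bij_betw_def)
  have "bij_betw (inv_into (verts G) f) (verts H) (verts G)"
    using bij by (rule bij_betw_inv_into)
  moreover have "\<sigma> \<in> snd (nbhd_complex H) \<longleftrightarrow> inv_into (verts G) f ` \<sigma> \<in> snd (nbhd_complex G)"
    if s: "\<sigma> \<subseteq> verts H" for \<sigma>
  proof -
    have sV: "inv_into (verts G) f ` \<sigma> \<subseteq> verts G" using s fimg inv_into_into[of _ f "verts G"] by blast
    have "f ` (inv_into (verts G) f ` \<sigma>) = \<sigma>" using s fimg by (simp add: image_inv_into_cancel)
    then show ?thesis using cond[OF sV] by simp
  qed
  ultimately show ?thesis unfolding complex_iso_def using fst_nc[OF nG] fst_nc[OF nH] by auto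
qed

theorem corollary4p12:
  fixes G :: "'a graph" and H :: "'b graph"
  assumes "is_graph G" and "is_graph H"
    and "locally_finite G" and "locally_finite H"
    and "stiff G" and "stiff H"
    and "no_isolated G" and "no_isolated H"
    and "complexes_isomorphic (nbhd_complex G) (nbhd_complex H)"
  shows "two_colored_isomorphic G H"
proof -
  obtain f where iso: "complex_iso (nbhd_complex G) (nbhd_complex H) f"
    using assms(9) unfolding complexes_isomorphic_def by auto
  have bij: "bij_betw f (verts G) (verts H)"
    using iso fst_nc[OF assms(7)] fst_nc[OF assms(8)] unfolding complex_iso_def by auto
  have inj: "inj_on f (verts G)" using bij by (simp add: bij_betw_def)
  have fimg: "f ` verts G = verts H" using bij by (simp add: bij_betw_def)
  define g where "g v = (SOME w. w \<in> verts H \<and> f ` nbhd G v = nbhd H w)" for v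
  have g: "g v \<in> verts H \<and> f ` nbhd G v = nbhd H (g v)" if "v \<in> verts G" for v
    unfolding g_def using someI_ex[OF key[OF assms(1,2,3,4,5,7,8) iso that, unfolded Bex_def]] .
  have nbinjG: "v = v'" if "v \<in> verts G" "v' \<in> verts G" "nbhd G v = nbhd G v'" for v v'
    using assms(5) that unfolding stiff_def by blast
  have nbinjH: "v = v'" if "v \<in> verts H" "v' \<in> verts H" "nbhd H v = nbhd H v'" for v v'
    using assms(6) that unfolding stiff_def by blast
  have ginj: "inj_on g (verts G)"
  proof (rule inj_onI)
    fix v v' assume v: "v \<in> verts G" "v' \<in> verts G" "g v = g v'"
    then have "f ` nbhd G v = f ` nbhd G v'" using g by metis
    then have "nbhd G v = nbhd G v'"
      using inj nbhd_sub[OF assms(1)] by (metis inj_on_image_eq_iff)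
    then show "v = v'" using nbinjG v by blast
  qed
  have gsurj: "g ` verts G = verts H"
  proof
    show "g ` verts G \<subseteq> verts H" using g by auto
    show "verts H \<subseteq> g ` verts G"
    proof
      fix w assume w: "w \<in> verts H"
      define h where "h = inv_into (verts G) f"
      obtain v where v: "v \<in> verts G" "h ` nbhd H w = nbhd G v"
        using key[OF assms(2,1,4,3,6,8,7) iso_inv[OF assms(7,8) iso] w] unfolding h_def by blast
      have "f ` nbhd G v = nbhd H w"
        using v(2) nbhd_sub[OF assms(2), of w] fimg unfolding h_def
        by (metis image_inv_into_cancel order_refl)
      then have "nbhd H (g v) = nbhd H w" using g[OF v(1)] by simp
      then have "g v = w" using nbinjH g[OF v(1)] w by blast
      then show "w \<in> g ` verts G" using v(1) by blast
    qed
  qed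
  define \<phi> where "\<phi> p = (if fst p = 1 then (1::nat, f (snd p)) else (fst p, g (snd p)))" for p
  have edgeG: "(x, y) \<in> edges G \<longleftrightarrow> (f x, g y) \<in> edges H" if "x \<in> verts G" "y \<in> verts G" for x y
  proof -
    have "(x, y) \<in> edges G \<longleftrightarrow> x \<in> nbhd G y"
      using assms(1) unfolding is_graph_def nbhd_def sym_def by blast
    also have "\<dots> \<longleftrightarrow> f x \<in> f ` nbhd G y"
      using inj nbhd_sub[OF assms(1)] that by (metis inj_on_image_mem_iff)
    also have "\<dots> \<longleftrightarrow> f x \<in> nbhd H (g y)" using g[OF that(2)] by simp
    also have "\<dots> \<longleftrightarrow> (f x, g y) \<in> edges H"
      using assms(2) unfolding is_graph_def nbhd_def sym_def by blast
    finally show ?thesis .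
  qed
  have symG: "(x, y) \<in> edges G \<longleftrightarrow> (y, x) \<in> edges G" for x y
    using assms(1) unfolding is_graph_def sym_def by blast
  have symH: "(x, y) \<in> edges H \<longleftrightarrow> (y, x) \<in> edges H" for x y
    using assms(2) unfolding is_graph_def sym_def by blast
  have bijphi: "bij_betw \<phi> ({1,2} \<times> verts G) ({1,2} \<times> verts H)"
  proof (rule bij_betw_imageI)
    show "inj_on \<phi> ({1,2} \<times> verts G)"
    proof (rule inj_onI)
      fix p q assume p: "p \<in> {1,2} \<times> verts G" and q: "q \<in> {1,2} \<times> verts G" and e: "\<phi> p = \<phi> q"
      obtain i x j y where pq: "p = (i,x)" "q = (j,y)" "i \<in> {1,2}" "j \<in> {1,2}"
        "x \<in> verts G" "y \<in> verts G" using p q by auto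
      show "p = q"
      proof (cases "i = 1")
        case True
        then have "j = 1" using e pq unfolding \<phi>_def by (auto split: if_splits)
        then show ?thesis using True e pq inj_onD[OF inj] unfolding \<phi>_def by auto
      next
        case False
        then have "j \<noteq> 1" "i = j" using e pq unfolding \<phi>_def by (auto split: if_splits)
        then show ?thesis using False e pq inj_onD[OF ginj] unfolding \<phi>_def by auto
      qed
    qed
    show "\<phi> ` ({1,2} \<times> verts G) = {1,2} \<times> verts H"
    proof
      show "\<phi> ` ({1,2} \<times> verts G) \<subseteq> {1,2} \<times> verts H"
        using fimg gsurj unfolding \<phi>_def by auto
      show "{1,2} \<times> verts H \<subseteq> \<phi> ` ({1,2} \<times> verts G)"
      proof
        fix p :: "nat \<times> 'b" assume p: "p \<in> {1,2} \<times> verts H"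
        then obtain i w where pw: "p = (i, w)" "i \<in> {1,2}" "w \<in> verts H" by auto
        show "p \<in> \<phi> ` ({1,2} \<times> verts G)"
        proof (cases "i = 1")
          case True
          obtain v where "v \<in> verts G" "f v = w" using fimg pw(3) by (metis imageE)
          then show ?thesis using True pw unfolding \<phi>_def by (auto intro!: image_eqI[where x="(1,v)"])
        next
          case False
          obtain v where "v \<in> verts G" "g v = w" using gsurj pw(3) by (metis imageE)
          then show ?thesis using False pw unfolding \<phi>_def by (auto intro!: image_eqI[where x="(i,v)"])
        qed
      qed
    qed
  qed
  have "graph_iso (K2_times G) (K2_times H) \<phi>"
    unfolding graph_iso_def
  proof (intro conjI ballI)
    show "bij_betw \<phi> (verts (K2_times G)) (verts (K2_times H))"
      using bijphi unfolding K2_times_def verts_def by simp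
  next
    fix p q assume p: "p \<in> verts (K2_times G)" and q: "q \<in> verts (K2_times G)"
    then obtain i x j y where pq: "p = (i,x)" "q = (j,y)" "i \<in> {1,2}" "j \<in> {1,2}"
      "x \<in> verts G" "y \<in> verts G"
      unfolding K2_times_def verts_def by auto
    have eK: "\<And>G a b c d. ((a,b),(c,d)) \<in> edges (K2_times G) \<longleftrightarrow> a \<in> {1,2} \<and> c \<in> {1,2} \<and> a \<noteq> c \<and> (b,d) \<in> edges G"
      unfolding K2_times_def edges_def by simp
    have ij: "(i = 1 \<and> j = 1) \<or> (i = 1 \<and> j = 2) \<or> (i = 2 \<and> j = 1) \<or> (i = 2 \<and> j = 2)"
      using pq(3,4) by auto
    then show "(p, q) \<in> edges (K2_times G) \<longleftrightarrow> (\<phi> p, \<phi> q) \<in> edges (K2_times H)"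
    proof (elim disjE conjE)
      assume "i = 1" "j = 1" then show ?thesis using pq by (simp add: \<phi>_def eK)
    next
      assume "i = 2" "j = 2" then show ?thesis using pq by (simp add: \<phi>_def eK)
    next
      assume "i = 1" "j = 2" then show ?thesis using pq edgeG[of x y] by (simp add: \<phi>_def eK)
    next
      assume "i = 2" "j = 1" then show ?thesis
        using pq edgeG[of y x] symG[of x y] symH[of "g x" "f y"] by (simp add: \<phi>_def eK)
    qed
  qed
  moreover have "\<forall>p\<in>verts (K2_times G). fst (\<phi> p) = fst p"
    unfolding \<phi>_def by auto
  ultimately show ?thesis unfolding two_colored_isomorphic_def by blast
qed

end
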